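(* Let $J=(\Omega,\mathcal A,\mu)$ be a probability space, let $W:\Omega\times\Omega\to[0,1]$ be a symmetric measurable function, and let $f,g:\mathbb{R}^2\to\mathbb{R}$ be Lipschitz continuous. Then the evolution equation \[ \dot u_x=f\Big(u_x,\int_J W(x,y)\,g(u_x,u_y)\,d\mu(y)\Big),\qquad x\in J, \] defines a dynamical system (a flow defined for all $t\in\mathbb{R}$) on $L^1(J)$: for every initial condition in $L^1(J)$ there is a unique solution $t\mapsto u(t)\in L^1(J)$ defined for all $t\in\mathbb{R}$.
   Context: The equation is understood in $L^1(J)$: for every $t$ it holds for almost every $x\in J$ (the null set may depend on $t$). The pair $(J,W)$ is called a graphon. *)

theory Defs
  imports "HOL-Analysis.Analysis" "HOL-Probability.Probability"
begin

definition graphon_rhs ::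
  "'a measure \<Rightarrow> ('a \<Rightarrow> 'a \<Rightarrow> real) \<Rightarrow> (real \<times> real \<Rightarrow> real) \<Rightarrow> (real \<times> real \<Rightarrow> real)
   \<Rightarrow> ('a \<Rightarrow> real) \<Rightarrow> 'a \<Rightarrow> real" where
  "graphon_rhs M W f g v x = f (v x, \<integral>y. W x y * g (v x, v y) \<partial>M)"

definition L1_has_deriv_at ::
  "'a measure \<Rightarrow> (real \<Rightarrow> 'a \<Rightarrow> real) \<Rightarrow> ('a \<Rightarrow> real) \<Rightarrow> real \<Rightarrow> bool" where
  "L1_has_deriv_at M u w t \<longleftrightarrow>
     ((\<lambda>h. \<integral>\<^sup>+ x. ennreal \<bar>(u (t + h) x - u t x) / h - w x\<bar> \<partial>M) \<longlongrightarrow> 0) (at 0)"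

definition graphon_L1_solution ::
  "'a measure \<Rightarrow> ('a \<Rightarrow> 'a \<Rightarrow> real) \<Rightarrow> (real \<times> real \<Rightarrow> real) \<Rightarrow> (real \<times> real \<Rightarrow> real)
   \<Rightarrow> (real \<Rightarrow> 'a \<Rightarrow> real) \<Rightarrow> bool" where
  "graphon_L1_solution M W f g u \<longleftrightarrow>
     (\<forall>t. integrable M (u t)) \<and>
     (\<forall>t. L1_has_deriv_at M u (graphon_rhs M W f g (u t)) t)"

end

theory Submission
  imports Defs
begin


definition nrm :: "'a measure \<Rightarrow> ('a \<Rightarrow> real) \<Rightarrow> real" where
  "nrm M v = (\<integral>x. \<bar>v x\<bar> \<partial>M)"

lemma nrm_nonneg: "0 \<le> nrm M v"
  unfolding nrm_def by simp

lemma nrm_scale: "nrm M (\<lambda>x. c * v x) = \<bar>c\<bar> * nrm M v"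
  unfolding nrm_def by (simp add: abs_mult)

lemma nrm_cong: "(\<And>x. x \<in> space M \<Longrightarrow> v x = w x) \<Longrightarrow> nrm M v = nrm M w"
  unfolding nrm_def by (intro Bochner_Integration.integral_cong) auto

lemma nrm_swap: "nrm M (\<lambda>x. v x - w x) = nrm M (\<lambda>x. w x - v x)"
  unfolding nrm_def by (simp add: abs_minus_commute)

lemma nrm_mono:
  assumes "integrable M w" "\<And>x. x \<in> space M \<Longrightarrow> \<bar>v x\<bar> \<le> w x"
  shows "nrm M v \<le> integral\<^sup>L M w"
proof -
  have "integrable M (\<lambda>x. \<bar>v x\<bar>) \<or> \<not> integrable M (\<lambda>x. \<bar>v x\<bar>)" by simp
  then show ?thesis
  proof
    assume "integrable M (\<lambda>x. \<bar>v x\<bar>)"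
    then show ?thesis unfolding nrm_def using assms by (intro integral_mono) auto
  next
    assume "\<not> integrable M (\<lambda>x. \<bar>v x\<bar>)"
    then have "nrm M v = 0" unfolding nrm_def by (simp add: not_integrable_integral_eq)
    moreover have "0 \<le> integral\<^sup>L M w" using assms
      by (intro integral_nonneg_AE) (auto intro!: AE_I2 order_trans[OF abs_ge_zero])
    ultimately show ?thesis by simp
  qed
qed

lemma nrm_add:
  assumes "integrable M a" "integrable M b" "\<And>x. x \<in> space M \<Longrightarrow> v x = a x + b x"
  shows "nrm M v \<le> nrm M a + nrm M b"
proof -
  have "nrm M v \<le> (\<integral>x. \<bar>a x\<bar> + \<bar>b x\<bar> \<partial>M)"
    using assms by (intro nrm_mono) auto
  also have "\<dots> = nrm M a + nrm M b" unfolding nrm_def using assms by simp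
  finally show ?thesis .
qed

lemma nrm_add3:
  assumes "integrable M a" "integrable M b" "integrable M c"
    "\<And>x. x \<in> space M \<Longrightarrow> v x = a x + b x + c x"
  shows "nrm M v \<le> nrm M a + nrm M b + nrm M c"
proof -
  have "nrm M v \<le> nrm M (\<lambda>x. a x + b x) + nrm M c"
    using assms by (intro nrm_add) auto
  also have "nrm M (\<lambda>x. a x + b x) \<le> nrm M a + nrm M b"
    using assms by (intro nrm_add) auto
  finally show ?thesis by simp
qed

lemma nrm_add4:
  assumes "integrable M a" "integrable M b" "integrable M c" "integrable M d"
    "\<And>x. x \<in> space M \<Longrightarrow> v x = a x + b x + c x + d x"
  shows "nrm M v \<le> nrm M a + nrm M b + nrm M c + nrm M d"
proof -
  have "nrm M v \<le> nrm M (\<lambda>x. a x + b x + c x) + nrm M d"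
    using assms by (intro nrm_add) auto
  also have "nrm M (\<lambda>x. a x + b x + c x) \<le> nrm M a + nrm M b + nrm M c"
    using assms by (intro nrm_add3) auto
  finally show ?thesis by simp
qed

lemma nrm_ennreal:
  assumes "integrable M v"
  shows "(\<integral>\<^sup>+x. ennreal \<bar>v x\<bar> \<partial>M) = ennreal (nrm M v)"
  unfolding nrm_def using assms by (intro nn_integral_eq_integral) auto

lemma nrm_zero_AE:
  assumes "integrable M v" "nrm M v = 0"
  shows "AE x in M. v x = 0"
proof -
  have "AE x in M. \<bar>v x\<bar> = 0"
    using assms unfolding nrm_def by (subst integral_nonneg_eq_0_iff_AE[symmetric]) auto
  then show ?thesis by auto
qed

lemma l1_limit:
  fixes f :: "nat \<Rightarrow> 'a \<Rightarrow> real"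
  assumes int: "\<And>k. integrable M (f k)"
    and d: "\<And>k. nrm M (\<lambda>x. f (Suc k) x - f k x) \<le> C * (1/2)^k"
  shows "integrable M (\<lambda>x. lim (\<lambda>i. f i x))"
    and "\<And>k. nrm M (\<lambda>x. f k x - lim (\<lambda>i. f i x)) \<le> 2 * C * (1/2)^k"
proof -
  define g where "g x = lim (\<lambda>i. f i x)" for x
  define dd where "dd i x = \<bar>f (Suc i) x - f i x\<bar>" for i x
  have C0: "0 \<le> C" using d[of 0] nrm_nonneg[of M] by (metis order_trans power_0 mult_1_right)
  have meas[measurable]: "\<And>k. f k \<in> borel_measurable M" using int by auto
  have gm[measurable]: "g \<in> borel_measurable M" unfolding g_def by measurable
  have ddm[measurable]: "\<And>i. dd i \<in> borel_measurable M" unfolding dd_def by measurable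
  have sumgeo: "summable (\<lambda>i. C * (1/2::real)^i)" by (intro summable_mult summable_geometric) simp
  have sumgeo_val: "(\<Sum>i. C * (1/2::real)^(i+k)) = 2 * C * (1/2)^k" for k
  proof -
    have "(\<Sum>i. C * (1/2::real)^(i+k)) = (\<Sum>i. (C * (1/2)^k) * (1/2)^i)"
      by (simp add: power_add mult_ac)
    also have "\<dots> = (C * (1/2)^k) * (\<Sum>i. (1/2::real)^i)"
      by (intro suminf_mult summable_geometric) simp
    also have "(\<Sum>i. (1/2::real)^i) = 2" using suminf_geometric[of "1/2::real"] by simp
    finally show ?thesis by simp
  qed
  have nnk: "(\<integral>\<^sup>+x. (\<Sum>i. ennreal (dd (i+k) x)) \<partial>M) \<le> ennreal (2 * C * (1/2)^k)" for k
  proof -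
    have "(\<integral>\<^sup>+x. (\<Sum>i. ennreal (dd (i+k) x)) \<partial>M) = (\<Sum>i. \<integral>\<^sup>+x. ennreal (dd (i+k) x) \<partial>M)"
      by (intro nn_integral_suminf) measurable
    also have "\<dots> = (\<Sum>i. ennreal (nrm M (\<lambda>x. f (Suc (i+k)) x - f (i+k) x)))"
      unfolding dd_def using int by (subst nrm_ennreal) auto
    also have "\<dots> \<le> (\<Sum>i. ennreal (C * (1/2)^(i+k)))"
      by (intro suminf_le) (auto intro!: ennreal_leI d)
    also have "\<dots> = ennreal (\<Sum>i. C * (1/2)^(i+k))"
      using C0 sumgeo by (intro suminf_ennreal2) (auto simp: summable_iff_shift[where k=k, of "\<lambda>i. C * (1/2::real)^i"])
    also have "\<dots> = ennreal (2 * C * (1/2)^k)" by (simp add: sumgeo_val)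
    finally show ?thesis .
  qed
  have "AE x in M. (\<Sum>i. ennreal (dd (i+0) x)) \<noteq> \<infinity>"
    using nnk[of 0] by (intro nn_integral_PInf_AE) (auto simp: top_unique)
  then have AEs: "AE x in M. summable (\<lambda>i. dd i x)"
    by eventually_elim (auto intro: summable_suminf_not_top simp: dd_def)
  have AEk: "AE x in M. \<bar>f k x - g x\<bar> \<le> (\<Sum>i. dd (i+k) x)" for k
    using AEs
  proof eventually_elim
    case (elim x)
    let ?a = "\<lambda>i. f (Suc i) x - f i x"
    have sa: "summable ?a" using elim unfolding dd_def by (rule summable_rabs_cancel)
    have "(\<lambda>n. \<Sum>i<n. ?a i) \<longlonglongrightarrow> (\<Sum>i. ?a i)" using sa by (rule summable_LIMSEQ)
    moreover have "(\<Sum>i<n. ?a i) = f n x - f 0 x" for n by (induction n) auto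
    ultimately have "(\<lambda>n. f n x - f 0 x) \<longlonglongrightarrow> (\<Sum>i. ?a i)" by simp
    then have "(\<lambda>n. f n x - f 0 x + f 0 x) \<longlonglongrightarrow> (\<Sum>i. ?a i) + f 0 x"
      by (intro tendsto_add) auto
    then have "(\<lambda>n. f n x) \<longlonglongrightarrow> (\<Sum>i. ?a i) + f 0 x" by simp
    then have gx: "g x = (\<Sum>i. ?a i) + f 0 x" unfolding g_def by (rule limI)
    have "(\<Sum>i. ?a i) = (\<Sum>i. ?a (i+k)) + (\<Sum>i<k. ?a i)" using sa by (rule suminf_split_initial_segment)
    moreover have "(\<Sum>i<k. ?a i) = f k x - f 0 x" by (induction k) auto
    ultimately have "f k x - g x = - (\<Sum>i. ?a (i+k))" using gx by simp
    moreover have "\<bar>\<Sum>i. ?a (i+k)\<bar> \<le> (\<Sum>i. dd (i+k) x)"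
    proof -
      have "summable (\<lambda>i. dd (i+k) x)" using elim summable_iff_shift[where f="\<lambda>i. dd i x" and k=k] by simp
      then show ?thesis unfolding dd_def by (intro summable_rabs) auto
    qed
    ultimately show ?case by simp
  qed
  have nnb: "(\<integral>\<^sup>+x. ennreal \<bar>f k x - g x\<bar> \<partial>M) \<le> ennreal (2 * C * (1/2)^k)" for k
  proof -
    have "(\<integral>\<^sup>+x. ennreal \<bar>f k x - g x\<bar> \<partial>M) \<le> (\<integral>\<^sup>+x. (\<Sum>i. ennreal (dd (i+k) x)) \<partial>M)"
    proof (intro nn_integral_mono_AE)
      show "AE x in M. ennreal \<bar>f k x - g x\<bar> \<le> (\<Sum>i. ennreal (dd (i + k) x))"
        using AEk[of k] AEs
      proof eventually_elim
        case (elim x)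
        have "summable (\<lambda>i. dd (i+k) x)" using elim(2) summable_iff_shift[where f="\<lambda>i. dd i x" and k=k] by simp
        then have "(\<Sum>i. ennreal (dd (i + k) x)) = ennreal (\<Sum>i. dd (i+k) x)"
          by (intro suminf_ennreal2) (auto simp: dd_def)
        then show ?case using elim(1) by (simp add: ennreal_leI)
      qed
    qed
    also have "\<dots> \<le> ennreal (2 * C * (1/2)^k)" by (rule nnk)
    finally show ?thesis .
  qed
  show gi: "integrable M (\<lambda>x. lim (\<lambda>i. f i x))"
  proof -
    have "integrable M (\<lambda>x. f 0 x - g x)"
    proof (rule integrableI_bounded)
      show "(\<integral>\<^sup>+ x. ennreal (norm (f 0 x - g x)) \<partial>M) < \<infinity>"
        using nnk nnb[of 0] by (simp add: le_less_trans)
    qed measurable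
    then have "integrable M (\<lambda>x. f 0 x - (f 0 x - g x))" by (rule Bochner_Integration.integrable_diff[OF int[of 0]])
    then show ?thesis unfolding g_def by simp
  qed
  fix k
  have "integrable M (\<lambda>x. f k x - g x)" using gi int unfolding g_def by auto
  then have "ennreal (nrm M (\<lambda>x. f k x - g x)) \<le> ennreal (2 * C * (1/2)^k)"
    using nnb[of k] by (simp add: nrm_ennreal)
  then show "nrm M (\<lambda>x. f k x - lim (\<lambda>i. f i x)) \<le> 2 * C * (1/2)^k"
    using C0 unfolding g_def by (subst (asm) ennreal_le_iff) auto
qed



lemma cell_induct:
  fixes P :: "real \<Rightarrow> real \<Rightarrow> bool"
  assumes h: "0 < h"
    and trans: "\<And>a m b. lo \<le> a \<Longrightarrow> a \<le> m \<Longrightarrow> m \<le> b \<Longrightarrow> b \<le> hi \<Longrightarrow> P a m \<Longrightarrow> P m b \<Longrightarrow> P a b"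
    and cell: "\<And>a b. lo \<le> a \<Longrightarrow> a \<le> b \<Longrightarrow> b \<le> hi \<Longrightarrow> b \<le> (of_int \<lfloor>a/h\<rfloor> + 1) * h \<Longrightarrow> P a b"
  shows "lo \<le> a \<Longrightarrow> a \<le> b \<Longrightarrow> b \<le> hi \<Longrightarrow> P a b"
proof -
  have "\<forall>a. nat (\<lfloor>b/h\<rfloor> - \<lfloor>a/h\<rfloor>) = n \<longrightarrow> lo \<le> a \<longrightarrow> a \<le> b \<longrightarrow> b \<le> hi \<longrightarrow> P a b" for n
  proof (induction n rule: less_induct)
    case (less n)
    show ?case
    proof (intro allI impI)
      fix a assume n: "nat (\<lfloor>b/h\<rfloor> - \<lfloor>a/h\<rfloor>) = n" and a: "lo \<le> a" "a \<le> b" "b \<le> hi"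
      show "P a b"
      proof (cases "b \<le> (of_int \<lfloor>a/h\<rfloor> + 1) * h")
        case True then show ?thesis using cell a by auto
      next
        case False
        define m where "m = (of_int \<lfloor>a/h\<rfloor> + 1) * h"
        have "a/h < of_int \<lfloor>a/h\<rfloor> + 1" by linarith
        then have am: "a \<le> m" unfolding m_def using h by (simp add: field_simps)
        have mb: "m \<le> b" using False m_def by simp
        have fm: "\<lfloor>m/h\<rfloor> = \<lfloor>a/h\<rfloor> + 1" unfolding m_def using h by simp
        have "m/h \<le> b/h" using mb h by (simp add: divide_right_mono)
        then have "\<lfloor>m/h\<rfloor> \<le> \<lfloor>b/h\<rfloor>" by (rule floor_mono)
        then have lt: "nat (\<lfloor>b/h\<rfloor> - \<lfloor>m/h\<rfloor>) < n" using n fm by linarith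
        have Pm: "P m b" using less.IH[OF lt] a am mb by auto
        have Pa: "P a m" using cell[of a m] a am mb m_def by auto
        show ?thesis by (rule trans[OF a(1) am mb a(3) Pa Pm])
      qed
    qed
  qed
  then show "lo \<le> a \<Longrightarrow> a \<le> b \<Longrightarrow> b \<le> hi \<Longrightarrow> P a b" by blast
qed

lemma le_geo_limit:
  fixes x c D :: real
  assumes "\<And>k::nat. x \<le> c + D * (1/2)^k"
  shows "x \<le> c"
proof -
  have "(\<lambda>k. c + D * (1/2::real)^k) \<longlonglongrightarrow> c + D * 0"
    by (intro tendsto_intros) simp
  then have "(\<lambda>k. c + D * (1/2::real)^k) \<longlonglongrightarrow> c" by simp
  then show ?thesis using assms by (intro LIMSEQ_le_const[of _ c]) auto
qed

lemma gronwall_dini: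
  fixes w :: "real \<Rightarrow> real" and L :: real
  assumes L: "0 \<le> L" and w0: "w 0 = 0" and cont: "continuous_on {0..} w"
    and step: "\<And>t e. 0 \<le> t \<Longrightarrow> 0 < e \<Longrightarrow> \<exists>d>0. \<forall>h. 0 < h \<and> h < d \<longrightarrow> w (t+h) \<le> w t * (1 + h*L) + h*e"
    and t0: "0 \<le> t0"
  shows "w t0 \<le> 0"
proof -
  have main: "w t0 \<le> e * exp ((L+1) * t0)" if e: "0 < e" for e
  proof -
    define b where "b r = e * exp ((L+1) * r)" for r
    have bmono: "b r \<le> b r'" if "r \<le> r'" for r r'
      unfolding b_def using e that L by (intro mult_left_mono) (auto intro: mult_left_mono)
    have be: "e \<le> b r" if "0 \<le> r" for r
      unfolding b_def using e that L by (simp add: mult_nonneg_nonneg)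
    define S where "S = {t. 0 \<le> t \<and> t \<le> t0 \<and> (\<forall>r. 0 \<le> r \<and> r \<le> t \<longrightarrow> w r \<le> b r)}"
    have S0: "0 \<in> S" unfolding S_def using t0 w0 be[of 0] e by auto
    have bdd: "bdd_above S" unfolding S_def by (auto intro: bdd_aboveI[of _ t0])
    define s where "s = Sup S"
    have s0: "0 \<le> s" unfolding s_def using S0 bdd by (rule cSup_upper)
    have st0: "s \<le> t0" unfolding s_def using S0 by (intro cSup_least) (auto simp: S_def)
    have below: "w r \<le> b r" if "0 \<le> r" "r < s" for r
    proof -
      obtain t where "t \<in> S" "r < t" using \<open>r < s\<close> unfolding s_def
        using less_cSup_iff[OF _ bdd] S0 by blast
      then show ?thesis using that unfolding S_def by auto
    qed
    have ws: "w s \<le> b s"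
    proof (cases "s = 0")
      case True then show ?thesis using w0 be[of 0] e by simp
    next
      case False
      then have sp: "0 < s" using s0 by simp
      show ?thesis
      proof (rule field_le_epsilon)
        fix \<eta> :: real assume \<eta>: "0 < \<eta>"
        obtain d where d: "d > 0" "\<forall>r\<in>{0..}. dist r s < d \<longrightarrow> dist (w r) (w s) < \<eta>"
          using cont s0 \<eta> unfolding continuous_on_iff by (metis atLeast_iff)
        define r where "r = max 0 (s - d/2)"
        have r: "0 \<le> r" "r < s" "dist r s < d" unfolding r_def using sp d by (auto simp: dist_real_def)
        then have "\<bar>w r - w s\<bar> < \<eta>" using d by (auto simp: dist_real_def)
        moreover have "w r \<le> b r" using below r by auto
        moreover have "b r \<le> b s" using r by (intro bmono) simp
        ultimately show "w s \<le> b s + \<eta>" by linarith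
      qed
    qed
    have sS: "s \<in> S" unfolding S_def using s0 st0 below ws by (auto simp: le_less)
    have "s = t0"
    proof (rule ccontr)
      assume "s \<noteq> t0"
      then have lt: "s < t0" using st0 by simp
      obtain d where d: "d > 0" "\<forall>h. 0 < h \<and> h < d \<longrightarrow> w (s+h) \<le> w s * (1 + h*L) + h*e"
        using step[OF s0 e] by blast
      have fwd: "w (s+h) \<le> b (s+h)" if "0 < h" "h < d" for h
      proof -
        have "w (s+h) \<le> w s * (1 + h*L) + h*e" using d that by auto
        also have "\<dots> \<le> b s * (1 + h*L) + h * b s"
          using ws that L be[OF s0] by (intro add_mono mult_right_mono mult_left_mono) auto
        also have "\<dots> = b s * (1 + h*(L+1))" by (simp add: algebra_simps)
        also have "\<dots> \<le> b s * exp (h*(L+1))"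
          using be[OF s0] e by (intro mult_left_mono) (auto intro: exp_ge_add_one_self order_trans[OF less_imp_le[OF e]])
        also have "\<dots> = b (s+h)" unfolding b_def by (simp add: algebra_simps exp_add)
        finally show ?thesis .
      qed
      define s' where "s' = min (s + d/2) t0"
      have "s' \<in> S" unfolding S_def
      proof (intro CollectI conjI allI impI)
        show "0 \<le> s'" "s' \<le> t0" unfolding s'_def using s0 lt d by auto
      next
        fix r assume r: "0 \<le> r \<and> r \<le> s'"
        show "w r \<le> b r"
        proof (cases "r \<le> s")
          case True then show ?thesis using sS r unfolding S_def by auto
        next
          case False
          then show ?thesis using fwd[of "r - s"] r d unfolding s'_def by auto
        qed
      qed
      then have "s' \<le> s" unfolding s_def using bdd by (rule cSup_upper)
      then show False unfolding s'_def using lt d by auto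
    qed
    then show ?thesis using sS t0 unfolding S_def b_def by auto
  qed
  show ?thesis
  proof (rule ccontr)
    assume "\<not> w t0 \<le> 0"
    then have pos: "0 < w t0" by simp
    define E where "E = exp ((L+1) * t0)"
    have E: "0 < E" unfolding E_def by simp
    have "w t0 \<le> (w t0 / (2*E)) * E" using main[of "w t0 / (2*E)"] pos E unfolding E_def by simp
    also have "\<dots> = w t0 / 2" using E by simp
    finally show False using pos by simp
  qed
qed



lemma pow_le_exp: "0 \<le> x \<Longrightarrow> (1 + x) ^ j \<le> exp (x * real j)"
proof -
  assume x: "0 \<le> x"
  have "(1 + x) ^ j \<le> exp x ^ j" using x by (intro power_mono) (auto intro: exp_ge_add_one_self)
  also have "\<dots> = exp (x * real j)" by (simp add: exp_of_nat_mult[symmetric] mult.commute)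
  finally show ?thesis .
qed

locale lipF =
  fixes M :: "'a measure" and F :: "('a \<Rightarrow> real) \<Rightarrow> 'a \<Rightarrow> real" and L :: real
  assumes F_int: "integrable M v \<Longrightarrow> integrable M (F v)"
    and F_lip: "integrable M v \<Longrightarrow> integrable M w \<Longrightarrow>
        nrm M (\<lambda>x. F v x - F w x) \<le> L * nrm M (\<lambda>x. v x - w x)"
    and L_pos: "0 < L"
begin

fun eu :: "('a \<Rightarrow> real) \<Rightarrow> real \<Rightarrow> nat \<Rightarrow> 'a \<Rightarrow> real" where
  "eu v h 0 = v"
| "eu v h (Suc j) = (\<lambda>x. eu v h j x + h * F (eu v h j) x)"

definition eU :: "('a \<Rightarrow> real) \<Rightarrow> real \<Rightarrow> real \<Rightarrow> 'a \<Rightarrow> real" where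
  "eU v h t = (\<lambda>x. eu v h (nat \<lfloor>t/h\<rfloor>) x + (t - real (nat \<lfloor>t/h\<rfloor>) * h) * F (eu v h (nat \<lfloor>t/h\<rfloor>)) x)"

definition flow :: "('a \<Rightarrow> real) \<Rightarrow> real \<Rightarrow> 'a \<Rightarrow> real" where
  "flow v t = (\<lambda>x. lim (\<lambda>k. eU v ((1/2)^k) t x))"

definition A0 where "A0 = nrm M (F (\<lambda>x. 0))"

lemma A0_nonneg: "0 \<le> A0" unfolding A0_def by (rule nrm_nonneg)

lemma F_growth:
  assumes "integrable M y" shows "nrm M (F y) \<le> A0 + L * nrm M y"
proof -
  have i0: "integrable M (\<lambda>x::'a. 0::real)" by simp
  have "nrm M (F y) \<le> nrm M (\<lambda>x. F y x - F (\<lambda>x. 0) x) + nrm M (F (\<lambda>x. 0))"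
    using assms F_int[OF assms] F_int[OF i0] by (intro nrm_add) auto
  also have "\<dots> \<le> L * nrm M (\<lambda>x. y x - 0) + A0"
    unfolding A0_def using F_lip[OF assms i0] by simp
  finally show ?thesis by simp
qed

lemma F_lip': "integrable M v \<Longrightarrow> integrable M w \<Longrightarrow>
        nrm M (\<lambda>x. c * (F v x - F w x)) \<le> \<bar>c\<bar> * (L * nrm M (\<lambda>x. v x - w x))"
  using F_lip[of v w] by (simp add: nrm_scale mult_left_mono)

context
  fixes v :: "'a \<Rightarrow> real" assumes vi: "integrable M v"
begin

lemma eu_int: "integrable M (eu v h j)"
  by (induction j) (auto simp: vi F_int)

lemma eU_int: "integrable M (eU v h t)"
  unfolding eU_def using eu_int F_int by auto

lemma eu_bound:
  assumes h: "0 < h"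
  shows "nrm M (eu v h j) \<le> (nrm M v + real j * h * A0) * (1 + h*L)^j"
proof (induction j)
  case 0 then show ?case by simp
next
  case (Suc j)
  let ?y = "eu v h j"
  let ?q = "(1 + h*L)"
  have q1: "1 \<le> ?q" using h L_pos by simp
  have "nrm M (eu v h (Suc j)) \<le> nrm M ?y + nrm M (\<lambda>x. h * F ?y x)"
    using eu_int F_int by (intro nrm_add) auto
  also have "nrm M (\<lambda>x. h * F ?y x) \<le> h * (A0 + L * nrm M ?y)"
    using h F_growth[OF eu_int] by (simp add: nrm_scale)
  finally have "nrm M (eu v h (Suc j)) \<le> nrm M ?y * ?q + h * A0"
    by (simp add: algebra_simps)
  also have "\<dots> \<le> (nrm M v + real j * h * A0) * ?q^j * ?q + h * A0"
    using Suc q1 A0_nonneg by (intro add_mono mult_right_mono) auto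
  also have "\<dots> = (nrm M v + real j * h * A0) * ?q^Suc j + h * A0" by (simp add: mult_ac)
  also have "\<dots> \<le> (nrm M v + real j * h * A0) * ?q^Suc j + h * A0 * ?q^Suc j"
    using mult_left_mono[OF one_le_power[OF q1, of "Suc j"], of "h*A0"] h A0_nonneg by simp
  also have "\<dots> = (nrm M v + real (Suc j) * h * A0) * ?q^Suc j" by (simp add: algebra_simps)
  finally show ?case .
qed

definition R :: "real \<Rightarrow> real" where "R T = (nrm M v + T * A0) * exp (L * T)"
definition B :: "real \<Rightarrow> real" where "B T = A0 + L * R T"
definition K1 :: "real \<Rightarrow> real" where "K1 T = 2 * B T + T * L * B T * exp (L*T) / 4"

lemma R_nonneg: "0 \<le> T \<Longrightarrow> 0 \<le> R T"
  unfolding R_def using A0_nonneg nrm_nonneg[of M v] by simp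
lemma B_nonneg: "0 \<le> T \<Longrightarrow> 0 \<le> B T"
  unfolding B_def using A0_nonneg R_nonneg L_pos by simp
lemma K1_nonneg: "0 \<le> T \<Longrightarrow> 0 \<le> K1 T"
  unfolding K1_def using B_nonneg L_pos by simp

lemma eu_bound2:
  assumes h: "0 < h" and jT: "real j * h \<le> T"
  shows "nrm M (eu v h j) \<le> R T"
proof -
  have "nrm M (eu v h j) \<le> (nrm M v + real j * h * A0) * (1 + h*L)^j" by (rule eu_bound[OF h])
  also have "\<dots> \<le> (nrm M v + T * A0) * exp (L * T)"
  proof (intro mult_mono)
    show "nrm M v + real j * h * A0 \<le> nrm M v + T * A0"
      using jT A0_nonneg by (simp add: mult_right_mono)
    have "(1 + h*L)^j \<le> exp (h * L * real j)" using h L_pos by (intro pow_le_exp) simp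
    also have "\<dots> \<le> exp (L * T)" using jT L_pos by (simp add: mult_ac mult_left_mono)
    finally show "(1 + h*L)^j \<le> exp (L * T)" .
    show "0 \<le> nrm M v + T * A0" using jT h A0_nonneg nrm_nonneg[of M v]
      by (metis add_nonneg_nonneg mult_nonneg_nonneg of_nat_0_le_iff order_trans zero_le_mult_iff less_imp_le)
  qed (use h L_pos in simp)
  finally show ?thesis unfolding R_def .
qed

lemma Feu_bound:
  assumes h: "0 < h" and jT: "real j * h \<le> T"
  shows "nrm M (F (eu v h j)) \<le> B T"
  using F_growth[OF eu_int, of h j] eu_bound2[OF h jT] L_pos unfolding B_def
  by (smt (verit) mult_left_mono)

lemma eU_grid:
  assumes h: "0 < h" shows "eU v h (real j * h) = eu v h j"
  unfolding eU_def using h by simp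

lemma eU_cell:
  assumes h: "0 < h" and s: "real j * h \<le> s" "s \<le> (real j + 1) * h"
  shows "eU v h s = (\<lambda>x. eu v h j x + (s - real j * h) * F (eu v h j) x)"
proof (cases "s < (real j + 1) * h")
  case True
  have "\<lfloor>s/h\<rfloor> = int j" using s True h by (simp add: floor_eq_iff field_simps)
  then show ?thesis unfolding eU_def by simp
next
  case False
  then have "s = real (Suc j) * h" using s by simp
  then show ?thesis using eU_grid[OF h, of "Suc j"] by (auto simp: algebra_simps)
qed

lemma cell_facts:
  assumes h: "0 < h" and a: "0 \<le> a" and b: "b \<le> (of_int \<lfloor>a/h\<rfloor> + 1) * h"
  shows "real (nat \<lfloor>a/h\<rfloor>) * h \<le> a" "b \<le> (real (nat \<lfloor>a/h\<rfloor>) + 1) * h"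
    "a - h < real (nat \<lfloor>a/h\<rfloor>) * h" "0 \<le> real (nat \<lfloor>a/h\<rfloor>) * h"
proof -
  have f0: "0 \<le> \<lfloor>a/h\<rfloor>" using a h by simp
  then have e: "real (nat \<lfloor>a/h\<rfloor>) = of_int \<lfloor>a/h\<rfloor>" by simp
  have "of_int \<lfloor>a/h\<rfloor> \<le> a/h" by simp
  then have "of_int \<lfloor>a/h\<rfloor> * h \<le> a" by (metis pos_le_divide_eq[OF h])
  then show "real (nat \<lfloor>a/h\<rfloor>) * h \<le> a" using e by simp
  show "b \<le> (real (nat \<lfloor>a/h\<rfloor>) + 1) * h" using b e by simp
  have "a/h < of_int \<lfloor>a/h\<rfloor> + 1" by linarith
  then have "a < (of_int \<lfloor>a/h\<rfloor> + 1) * h" by (metis pos_divide_less_eq[OF h])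
  then show "a - h < real (nat \<lfloor>a/h\<rfloor>) * h" using e by (simp add: algebra_simps)
  show "0 \<le> real (nat \<lfloor>a/h\<rfloor>) * h" using h by simp
qed

lemma eU_lip:
  assumes h: "0 < h" and ab: "0 \<le> a" "a \<le> b" "b \<le> T"
  shows "nrm M (\<lambda>x. eU v h b x - eU v h a x) \<le> B T * (b - a)"
proof -
  let ?P = "\<lambda>a b. nrm M (\<lambda>x. eU v h b x - eU v h a x) \<le> B T * (b - a)"
  show ?thesis
  proof (rule cell_induct[OF h, of 0 T ?P, OF _ _ ab])
    fix a m b assume "0 \<le> a" "a \<le> m" "m \<le> b" "b \<le> T" "?P a m" "?P m b"
    moreover have "nrm M (\<lambda>x. eU v h b x - eU v h a x) \<le>
        nrm M (\<lambda>x. eU v h b x - eU v h m x) + nrm M (\<lambda>x. eU v h m x - eU v h a x)"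
      using eU_int by (intro nrm_add) auto
    ultimately show "?P a b" by (simp add: algebra_simps)
  next
    fix a b assume a: "0 \<le> a" "a \<le> b" "b \<le> T" "b \<le> (of_int \<lfloor>a/h\<rfloor> + 1) * h"
    define j where "j = nat \<lfloor>a/h\<rfloor>"
    note cf = cell_facts[OF h a(1) a(4), folded j_def]
    have "nrm M (\<lambda>x. eU v h b x - eU v h a x) = nrm M (\<lambda>x. (b - a) * F (eu v h j) x)"
      using eU_cell[OF h, of j a] eU_cell[OF h, of j b] cf a by (intro nrm_cong) (auto simp: algebra_simps)
    also have "\<dots> = (b - a) * nrm M (F (eu v h j))" using a by (simp add: nrm_scale)
    also have "\<dots> \<le> (b - a) * B T" using a cf by (intro mult_left_mono Feu_bound[OF h]) auto
    finally show "?P a b" by (simp add: mult_ac)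
  qed
qed

lemma eU_lip_abs:
  assumes h: "0 < h" and ab: "0 \<le> a" "a \<le> T" "0 \<le> b" "b \<le> T"
  shows "nrm M (\<lambda>x. eU v h b x - eU v h a x) \<le> B T * \<bar>b - a\<bar>"
proof (cases "a \<le> b")
  case True then show ?thesis using eU_lip[OF h, of a b T] ab by simp
next
  case False then show ?thesis using eU_lip[OF h, of b a T] ab nrm_swap[of M "eU v h b" "eU v h a"] by simp
qed

lemma eU_incr:
  assumes h: "0 < h" and ab: "0 \<le> a" "a \<le> b" "b \<le> T"
  shows "nrm M (\<lambda>x. eU v h b x - eU v h a x - (b - a) * F (eU v h a) x)
          \<le> (b - a) * (L * B T * (b - a + h))"
proof -
  define K where "K = L * B T * (b - a + h)"
  let ?P = "\<lambda>a' b'. nrm M (\<lambda>x. eU v h b' x - eU v h a' x - (b' - a') * F (eU v h a) x) \<le> (b' - a') * K"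
  have "?P a b"
  proof (rule cell_induct[OF h, of a b ?P])
    fix a' m b' assume "a \<le> a'" "a' \<le> m" "m \<le> b'" "b' \<le> b" "?P a' m" "?P m b'"
    moreover have "nrm M (\<lambda>x. eU v h b' x - eU v h a' x - (b' - a') * F (eU v h a) x) \<le>
        nrm M (\<lambda>x. eU v h b' x - eU v h m x - (b' - m) * F (eU v h a) x) +
        nrm M (\<lambda>x. eU v h m x - eU v h a' x - (m - a') * F (eU v h a) x)"
      using eU_int F_int[OF eU_int] by (intro nrm_add) (auto simp: algebra_simps)
    ultimately show "?P a' b'" by (simp add: algebra_simps)
  next
    fix a' b' assume a': "a \<le> a'" "a' \<le> b'" "b' \<le> b" "b' \<le> (of_int \<lfloor>a'/h\<rfloor> + 1) * h"
    define j where "j = nat \<lfloor>a'/h\<rfloor>"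
    have a'0: "0 \<le> a'" using a' ab by simp
    note cf = cell_facts[OF h a'0 a'(4), folded j_def]
    have "nrm M (\<lambda>x. eU v h b' x - eU v h a' x - (b' - a') * F (eU v h a) x)
        = nrm M (\<lambda>x. (b' - a') * (F (eu v h j) x - F (eU v h a) x))"
      using eU_cell[OF h, of j a'] eU_cell[OF h, of j b'] cf a' by (intro nrm_cong) (auto simp: algebra_simps)
    also have "\<dots> \<le> \<bar>b' - a'\<bar> * (L * nrm M (\<lambda>x. eu v h j x - eU v h a x))"
      by (intro F_lip' eu_int eU_int)
    finally have 1: "nrm M (\<lambda>x. eU v h b' x - eU v h a' x - (b' - a') * F (eU v h a) x)
       \<le> (b' - a') * (L * nrm M (\<lambda>x. eu v h j x - eU v h a x))" using a' by simp
    have "nrm M (\<lambda>x. eu v h j x - eU v h a x) = nrm M (\<lambda>x. eU v h (real j * h) x - eU v h a x)"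
      using eU_grid[OF h] by simp
    also have "\<dots> \<le> B T * \<bar>real j * h - a\<bar>"
      using cf a' ab by (intro eU_lip_abs[OF h]) auto
    also have "\<dots> \<le> B T * (b - a + h)" using cf a' ab B_nonneg[of T] by (intro mult_left_mono) auto
    finally have 2: "nrm M (\<lambda>x. eu v h j x - eU v h a x) \<le> B T * (b - a + h)" .
    have "(b' - a') * (L * nrm M (\<lambda>x. eu v h j x - eU v h a x)) \<le> (b' - a') * (L * (B T * (b - a + h)))"
      using 2 a' L_pos by (intro mult_left_mono) auto
    with 1 show "?P a' b'" unfolding K_def by (simp add: mult_ac)
  qed (use ab in auto)
  then show ?thesis unfolding K_def .
qed


lemma eu_cmp:
  assumes h: "0 < h"
  shows "real j * h \<le> T \<Longrightarrow> nrm M (\<lambda>x. eu v h j x - eu v (h/2) (2*j) x)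
          \<le> real j * (h^2 * L * B T / 4) * (1 + h*L)^j"
proof (induction j)
  case 0 then show ?case by (simp add: nrm_def)
next
  case (Suc j)
  let ?q = "1 + h*L"
  let ?c = "h^2 * L * B T / 4"
  define y where "y = eu v h j"
  define z where "z = eu v (h/2) (2*j)"
  define z' where "z' = eu v (h/2) (Suc (2*j))"
  define e where "e = nrm M (\<lambda>x. y x - z x)"
  have h2: "0 < h/2" using h by simp
  have jT: "real j * h \<le> T" using Suc.prems h by (simp add: algebra_simps)
  have T0: "0 \<le> T" using jT h by (smt (verit) mult_nonneg_nonneg of_nat_0_le_iff)
  have IH: "e \<le> real j * ?c * ?q^j" using Suc.IH[OF jT] unfolding e_def y_def z_def .
  have yi: "integrable M y" and zi: "integrable M z" and z'i: "integrable M z'"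
    unfolding y_def z_def z'_def by (rule eu_int)+
  have FzB: "nrm M (F z) \<le> B T" unfolding z_def
    using Feu_bound[OF h2, of "2*j" T] jT by simp
  have z'e: "\<And>x. z' x = z x + h/2 * F z x" unfolding z'_def z_def by simp
  have e2: "2 * Suc j = Suc (Suc (2*j))" by simp
  have "nrm M (\<lambda>x. eu v h (Suc j) x - eu v (h/2) (2 * Suc j) x)
     \<le> nrm M (\<lambda>x. y x - z x) + nrm M (\<lambda>x. h/2 * (F y x - F z x)) + nrm M (\<lambda>x. h/2 * (F y x - F z' x))"
    using yi zi z'i F_int[OF yi] F_int[OF zi] F_int[OF z'i] unfolding e2
    by (intro nrm_add3) (auto simp: y_def z_def z'_def algebra_simps)
  also have "nrm M (\<lambda>x. h/2 * (F y x - F z x)) \<le> h/2 * (L * e)"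
    using F_lip'[OF yi zi, of "h/2"] h unfolding e_def by simp
  also have "nrm M (\<lambda>x. h/2 * (F y x - F z' x)) \<le> h/2 * (L * nrm M (\<lambda>x. y x - z' x))"
    using F_lip'[OF yi z'i, of "h/2"] h by simp
  also have "nrm M (\<lambda>x. y x - z' x) \<le> e + h/2 * B T"
  proof -
    have "nrm M (\<lambda>x. y x - z' x) \<le> nrm M (\<lambda>x. y x - z x) + nrm M (\<lambda>x. (- (h/2)) * F z x)"
      using yi zi F_int[OF zi] z'e by (intro nrm_add) auto
    also have "nrm M (\<lambda>x. (- (h/2)) * F z x) = h/2 * nrm M (F z)"
      using nrm_scale[of M "-(h/2)" "F z"] h by simp
    moreover have "h/2 * nrm M (F z) \<le> h/2 * B T" using FzB h by (intro mult_left_mono) auto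
    ultimately show ?thesis unfolding e_def by linarith
  qed
  finally have "nrm M (\<lambda>x. eu v h (Suc j) x - eu v (h/2) (2 * Suc j) x)
      \<le> e + h/2 * (L * e) + h/2 * (L * (e + h/2 * B T))"
    using h L_pos unfolding e_def by (simp add: mult_left_mono)
  also have "\<dots> = e * ?q + ?c" by (simp add: algebra_simps power2_eq_square)
  also have "\<dots> \<le> real j * ?c * ?q^j * ?q + ?c"
    using IH h L_pos by (intro add_mono mult_right_mono) auto
  also have "\<dots> \<le> real j * ?c * ?q^Suc j + ?c * ?q^Suc j"
  proof -
    have c0: "0 \<le> ?c" using h L_pos B_nonneg[OF T0] by simp
    have "1 \<le> ?q^Suc j" using h L_pos by (intro one_le_power) simp
    from mult_left_mono[OF this c0] have "?c \<le> ?c * ?q^Suc j" by simp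
    then show ?thesis by (simp add: mult_ac)
  qed
  also have "\<dots> = real (Suc j) * ?c * ?q^Suc j" by (simp only: of_nat_Suc distrib_right mult_1)
  finally show ?case .
qed

lemma eU_cauchy:
  assumes h: "0 < h" and t: "0 \<le> t" "t \<le> T"
  shows "nrm M (\<lambda>x. eU v (h/2) t x - eU v h t x) \<le> h * K1 T"
proof -
  define j where "j = nat \<lfloor>t/h\<rfloor>"
  define s where "s = real j * h"
  have "t/h < of_int \<lfloor>t/h\<rfloor> + 1" by linarith
  then have tt: "t \<le> (of_int \<lfloor>t/h\<rfloor> + 1) * h" by (metis pos_divide_less_eq[OF h] less_imp_le)
  note cf = cell_facts[OF h t(1) tt, folded j_def, folded s_def]
  have T0: "0 \<le> T" using t by simp
  have sT: "s \<le> T" using cf t by simp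
  have h2: "0 < h/2" using h by simp
  have g1: "eU v h s = eu v h j" unfolding s_def by (rule eU_grid[OF h])
  have g2: "eU v (h/2) s = eu v (h/2) (2*j)"
    using eU_grid[OF h2, of "2*j"] unfolding s_def by (simp add: algebra_simps)
  have "nrm M (\<lambda>x. eU v (h/2) t x - eU v h t x) \<le>
      nrm M (\<lambda>x. eU v (h/2) t x - eU v (h/2) s x) + nrm M (\<lambda>x. eu v (h/2) (2*j) x - eu v h j x)
      + nrm M (\<lambda>x. eU v h s x - eU v h t x)"
    using eU_int eu_int g1 g2 by (intro nrm_add3) auto
  also have "nrm M (\<lambda>x. eU v (h/2) t x - eU v (h/2) s x) \<le> B T * h"
  proof -
    have "nrm M (\<lambda>x. eU v (h/2) t x - eU v (h/2) s x) \<le> B T * (t - s)"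
      using cf t by (intro eU_lip[OF h2]) auto
    also have "\<dots> \<le> B T * h" using cf B_nonneg[OF T0] by (intro mult_left_mono) auto
    finally show ?thesis .
  qed
  also have "nrm M (\<lambda>x. eU v h s x - eU v h t x) \<le> B T * h"
  proof -
    have "nrm M (\<lambda>x. eU v h s x - eU v h t x) = nrm M (\<lambda>x. eU v h t x - eU v h s x)" by (rule nrm_swap)
    also have "\<dots> \<le> B T * (t - s)"
      using cf t by (intro eU_lip[OF h]) auto
    also have "\<dots> \<le> B T * h" using cf B_nonneg[OF T0] by (intro mult_left_mono) auto
    finally show ?thesis .
  qed
  also have "nrm M (\<lambda>x. eu v (h/2) (2*j) x - eu v h j x) \<le> h * (T * L * B T * exp (L*T) / 4)"
  proof -
    have "nrm M (\<lambda>x. eu v (h/2) (2*j) x - eu v h j x) = nrm M (\<lambda>x. eu v h j x - eu v (h/2) (2*j) x)"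
      by (rule nrm_swap)
    also have "\<dots> \<le> real j * (h^2 * L * B T / 4) * (1 + h*L)^j"
      using sT unfolding s_def by (intro eu_cmp[OF h])
    also have "\<dots> = h * ((real j * h) * (L * B T / 4) * (1 + h*L)^j)"
      by (simp add: power2_eq_square mult_ac)
    also have "\<dots> \<le> h * (T * (L * B T / 4) * exp (L*T))"
    proof (intro mult_left_mono mult_mono)
      show "real j * h \<le> T" using sT s_def by simp
      have "(1 + h*L)^j \<le> exp (h * L * real j)" using h L_pos by (intro pow_le_exp) simp
      also have "\<dots> \<le> exp (L * T)" using sT L_pos unfolding s_def by (simp add: mult_ac mult_left_mono)
      finally show "(1 + h*L)^j \<le> exp (L * T)" .
    qed (use h L_pos B_nonneg[OF T0] T0 in auto)
    finally show ?thesis by (simp add: mult_ac)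
  qed
  finally show ?thesis unfolding K1_def by (simp add: algebra_simps)
qed

lemma flow_facts:
  assumes t: "0 \<le> t" "t \<le> T"
  shows "integrable M (flow v t)"
    and "nrm M (\<lambda>x. eU v ((1/2)^k) t x - flow v t x) \<le> 2 * K1 T * (1/2)^k"
proof -
  have d: "nrm M (\<lambda>x. eU v ((1/2)^Suc k) t x - eU v ((1/2)^k) t x) \<le> K1 T * (1/2)^k" for k
    using eU_cauchy[of "(1/2)^k" t T] t by (simp add: mult_ac)
  show "integrable M (flow v t)" unfolding flow_def
    by (rule l1_limit(1)[of M "\<lambda>k. eU v ((1/2)^k) t", OF eU_int d])
  show "nrm M (\<lambda>x. eU v ((1/2)^k) t x - flow v t x) \<le> 2 * K1 T * (1/2)^k" unfolding flow_def
    by (rule l1_limit(2)[of M "\<lambda>k. eU v ((1/2)^k) t", OF eU_int d])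
qed

lemma flow_int: "0 \<le> t \<Longrightarrow> integrable M (flow v t)"
  using flow_facts(1)[of t t] by simp

lemma flow_0: "flow v 0 = v"
proof -
  have "eU v h 0 = v" for h unfolding eU_def by simp
  then show ?thesis unfolding flow_def by (simp add: limI)
qed

lemma flow_lip:
  assumes ab: "0 \<le> a" "a \<le> b" "b \<le> T"
  shows "nrm M (\<lambda>x. flow v b x - flow v a x) \<le> B T * (b - a)"
proof (rule le_geo_limit[where D = "4 * K1 T"])
  fix k :: nat
  let ?h = "(1/2::real)^k"
  have h: "0 < ?h" by simp
  have ia: "integrable M (flow v a)" and ib: "integrable M (flow v b)" using ab by (auto intro: flow_int)
  have "nrm M (\<lambda>x. flow v b x - flow v a x) \<le> nrm M (\<lambda>x. flow v b x - eU v ?h b x)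
      + nrm M (\<lambda>x. eU v ?h b x - eU v ?h a x) + nrm M (\<lambda>x. eU v ?h a x - flow v a x)"
    using ia ib eU_int by (intro nrm_add3) auto
  also have "nrm M (\<lambda>x. flow v b x - eU v ?h b x) \<le> 2 * K1 T * ?h"
    using flow_facts(2)[of b T k] ab nrm_swap[of M "flow v b" "eU v ?h b"] by simp
  also have "nrm M (\<lambda>x. eU v ?h a x - flow v a x) \<le> 2 * K1 T * ?h"
    using flow_facts(2)[of a T k] ab by simp
  also have "nrm M (\<lambda>x. eU v ?h b x - eU v ?h a x) \<le> B T * (b - a)"
    using ab by (intro eU_lip[OF h]) auto
  finally show "nrm M (\<lambda>x. flow v b x - flow v a x) \<le> B T * (b - a) + 4 * K1 T * ?h" by simp
qed

lemma flow_incr: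
  assumes ab: "0 \<le> a" "a \<le> b" "b \<le> T"
  shows "nrm M (\<lambda>x. flow v b x - flow v a x - (b - a) * F (flow v a) x) \<le> L * B T * (b - a)^2"
proof (rule le_geo_limit[where D = "4 * K1 T + T * L * B T + 2 * T * L * K1 T"])
  fix k :: nat
  let ?h = "(1/2::real)^k"
  have h: "0 < ?h" by simp
  have T0: "0 \<le> T" using ab by simp
  have ia: "integrable M (flow v a)" and ib: "integrable M (flow v b)" using ab by (auto intro: flow_int)
  have "nrm M (\<lambda>x. flow v b x - flow v a x - (b - a) * F (flow v a) x)
     \<le> nrm M (\<lambda>x. flow v b x - eU v ?h b x)
      + nrm M (\<lambda>x. eU v ?h b x - eU v ?h a x - (b - a) * F (eU v ?h a) x)
      + nrm M (\<lambda>x. eU v ?h a x - flow v a x)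
      + nrm M (\<lambda>x. (b - a) * (F (eU v ?h a) x - F (flow v a) x))"
    using ia ib eU_int F_int[OF eU_int] F_int[OF ia] by (intro nrm_add4) (auto simp: algebra_simps)
  also have "nrm M (\<lambda>x. flow v b x - eU v ?h b x) \<le> 2 * K1 T * ?h"
    using flow_facts(2)[of b T k] ab nrm_swap[of M "flow v b" "eU v ?h b"] by simp
  also have "nrm M (\<lambda>x. eU v ?h a x - flow v a x) \<le> 2 * K1 T * ?h"
    using flow_facts(2)[of a T k] ab by simp
  also have "nrm M (\<lambda>x. eU v ?h b x - eU v ?h a x - (b - a) * F (eU v ?h a) x)
      \<le> (b - a) * (L * B T * (b - a + ?h))"
    using ab by (intro eU_incr[OF h]) auto
  also have "nrm M (\<lambda>x. (b - a) * (F (eU v ?h a) x - F (flow v a) x)) \<le> (b - a) * (L * (2 * K1 T * ?h))"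
  proof -
    have "nrm M (\<lambda>x. (b - a) * (F (eU v ?h a) x - F (flow v a) x))
        \<le> \<bar>b - a\<bar> * (L * nrm M (\<lambda>x. eU v ?h a x - flow v a x))"
      by (intro F_lip' eU_int ia)
    also have "\<dots> \<le> \<bar>b - a\<bar> * (L * (2 * K1 T * ?h))"
      using flow_facts(2)[of a T k] ab L_pos by (intro mult_left_mono) auto
    finally show ?thesis using ab by simp
  qed
  finally have 1: "nrm M (\<lambda>x. flow v b x - flow v a x - (b - a) * F (flow v a) x)
     \<le> L * B T * (b - a)^2 + ?h * (4 * K1 T + (b - a) * L * B T + 2 * (b - a) * L * K1 T)"
    by (simp add: algebra_simps power2_eq_square)
  have m1: "(b-a) * (L * B T) \<le> T * (L * B T)" using ab L_pos B_nonneg[OF T0] by (intro mult_right_mono) auto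
  have m2: "(b-a) * (L * K1 T) \<le> T * (L * K1 T)" using ab L_pos K1_nonneg[OF T0] by (intro mult_right_mono) auto
  have "4 * K1 T + (b - a) * L * B T + 2 * (b - a) * L * K1 T \<le> 4 * K1 T + T * L * B T + 2 * T * L * K1 T"
    using m1 m2 by (simp only: mult.assoc; linarith)
  then have 2: "?h * (4 * K1 T + (b - a) * L * B T + 2 * (b - a) * L * K1 T)
      \<le> ?h * (4 * K1 T + T * L * B T + 2 * T * L * K1 T)" by (intro mult_left_mono) auto
  have 3: "?h * (4 * K1 T + T * L * B T + 2 * T * L * K1 T) = (4 * K1 T + T * L * B T + 2 * T * L * K1 T) * ?h"
    by (rule mult.commute)
  from 1 2 3 show "nrm M (\<lambda>x. flow v b x - flow v a x - (b - a) * F (flow v a) x)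
      \<le> L * B T * (b - a)^2 + (4 * K1 T + T * L * B T + 2 * T * L * K1 T) * ?h"
    by linarith
qed

lemma flow_Q:
  assumes ab: "0 \<le> a" "a \<le> T" "0 \<le> b" "b \<le> T"
  shows "nrm M (\<lambda>x. flow v b x - flow v a x - (b - a) * F (flow v a) x) \<le> 2 * L * B T * (b - a)^2"
proof (cases "a \<le> b")
  case True
  have "L * B T * (b - a)^2 \<le> 2 * L * B T * (b - a)^2"
    using L_pos B_nonneg[of T] ab by simp
  then show ?thesis using flow_incr[of a b T] True ab by simp
next
  case False
  have ia: "integrable M (flow v a)" and ib: "integrable M (flow v b)" using ab by (auto intro: flow_int)
  have "nrm M (\<lambda>x. flow v b x - flow v a x - (b - a) * F (flow v a) x)
     \<le> nrm M (\<lambda>x. flow v a x - flow v b x - (a - b) * F (flow v b) x)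
       + nrm M (\<lambda>x. (a - b) * (F (flow v a) x - F (flow v b) x))"
  proof -
    have "nrm M (\<lambda>x. flow v b x - flow v a x - (b - a) * F (flow v a) x)
      \<le> nrm M (\<lambda>x. - (flow v a x - flow v b x - (a - b) * F (flow v b) x))
       + nrm M (\<lambda>x. (a - b) * (F (flow v a) x - F (flow v b) x))"
      using ia ib F_int[OF ia] F_int[OF ib] by (intro nrm_add) (auto simp: algebra_simps)
    then show ?thesis using nrm_scale[of M "-1" "\<lambda>x. flow v a x - flow v b x - (a - b) * F (flow v b) x"]
      by simp
  qed
  also have "nrm M (\<lambda>x. flow v a x - flow v b x - (a - b) * F (flow v b) x) \<le> L * B T * (a - b)^2"
    using flow_incr[of b a T] False ab by simp
  also have "nrm M (\<lambda>x. (a - b) * (F (flow v a) x - F (flow v b) x)) \<le> (a - b) * (L * (B T * (a - b)))"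
  proof -
    have "nrm M (\<lambda>x. (a - b) * (F (flow v a) x - F (flow v b) x))
        \<le> \<bar>a - b\<bar> * (L * nrm M (\<lambda>x. flow v a x - flow v b x))"
      by (intro F_lip' ia ib)
    also have "\<dots> \<le> \<bar>a - b\<bar> * (L * (B T * (a - b)))"
      using flow_lip[of b a T] False ab L_pos by (intro mult_left_mono) auto
    finally show ?thesis using False by simp
  qed
  finally show ?thesis by (simp add: algebra_simps power2_eq_square)
qed

end
end



lemma lip2:
  assumes "L-lipschitz_on UNIV f"
  shows "\<bar>f (a, b) - f (c, d)\<bar> \<le> L * (\<bar>a - c\<bar> + \<bar>b - d\<bar>)"
proof -
  have L: "0 \<le> L" using assms by (rule lipschitz_on_nonneg)
  have "dist (f (a, b)) (f (c, d)) \<le> L * dist (a, b) (c, d)"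
    using assms by (rule lipschitz_onD) auto
  moreover have "dist (a, b) (c, d) \<le> \<bar>a - c\<bar> + \<bar>b - d\<bar>"
  proof -
    have "dist (a, b) (c, d) = sqrt ((a - c)^2 + (b - d)^2)"
      by (simp add: dist_Pair_Pair dist_real_def)
    also have "\<dots> \<le> sqrt ((\<bar>a - c\<bar> + \<bar>b - d\<bar>)^2)"
      by (intro real_sqrt_le_mono) (simp add: power2_eq_square algebra_simps)
    also have "\<dots> = \<bar>a - c\<bar> + \<bar>b - d\<bar>" by simp
    finally show ?thesis .
  qed
  ultimately show ?thesis using L by (smt (verit) dist_real_def mult_left_mono)
qed

lemma lip2_0:
  assumes "L-lipschitz_on UNIV f"
  shows "\<bar>f (a, b)\<bar> \<le> \<bar>f (0, 0)\<bar> + L * (\<bar>a\<bar> + \<bar>b\<bar>)"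
  using lip2[OF assms, of a b 0 0] by simp

locale graphon = prob_space M for M :: "'a measure" +
  fixes W :: "'a \<Rightarrow> 'a \<Rightarrow> real" and f g :: "real \<times> real \<Rightarrow> real" and Lf Lg :: real
  assumes Wm[measurable]: "(\<lambda>(x, y). W x y) \<in> borel_measurable (M \<Otimes>\<^sub>M M)"
    and W01: "\<And>x y. 0 \<le> W x y \<and> W x y \<le> 1"
    and lf: "Lf-lipschitz_on UNIV f" and lg: "Lg-lipschitz_on UNIV g"
begin

lemma Lf0: "0 \<le> Lf" using lf by (rule lipschitz_on_nonneg)
lemma Lg0: "0 \<le> Lg" using lg by (rule lipschitz_on_nonneg)

lemma fm[measurable]: "f \<in> borel_measurable borel"
  using lf by (intro borel_measurable_continuous_onI lipschitz_on_continuous_on)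
lemma gm[measurable]: "g \<in> borel_measurable borel"
  using lg by (intro borel_measurable_continuous_onI lipschitz_on_continuous_on)

lemma Wx_meas: "x \<in> space M \<Longrightarrow> W x \<in> borel_measurable M"
proof -
  assume x: "x \<in> space M"
  have "(\<lambda>y. (\<lambda>(x, y). W x y) (x, y)) \<in> borel_measurable M"
    using x by measurable
  then show ?thesis by simp
qed

lemma inner_int:
  assumes vi: "integrable M v" and x: "x \<in> space M"
  shows "integrable M (\<lambda>y. W x y * g (v x, v y))"
proof (rule Bochner_Integration.integrable_bound)
  have [measurable]: "W x \<in> borel_measurable M" using Wx_meas[OF x] .
  have [measurable]: "v \<in> borel_measurable M" using vi by auto
  show "(\<lambda>y. W x y * g (v x, v y)) \<in> borel_measurable M" by measurable
  show "integrable M (\<lambda>y. \<bar>g (0, 0)\<bar> + Lg * (\<bar>v x\<bar> + \<bar>v y\<bar>))" using vi by auto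
  show "AE y in M. norm (W x y * g (v x, v y)) \<le> norm (\<bar>g (0, 0)\<bar> + Lg * (\<bar>v x\<bar> + \<bar>v y\<bar>))"
  proof (intro AE_I2)
    fix y
    have "\<bar>W x y * g (v x, v y)\<bar> \<le> \<bar>g (v x, v y)\<bar>"
      using W01[of x y] by (simp add: abs_mult mult_left_le_one_le)
    also have "\<dots> \<le> \<bar>g (0, 0)\<bar> + Lg * (\<bar>v x\<bar> + \<bar>v y\<bar>)" by (rule lip2_0[OF lg])
    finally show "norm (W x y * g (v x, v y)) \<le> norm (\<bar>g (0, 0)\<bar> + Lg * (\<bar>v x\<bar> + \<bar>v y\<bar>))"
      using Lg0 by simp
  qed
qed

lemma I_meas:
  assumes vi: "integrable M v"
  shows "(\<lambda>x. \<integral>y. W x y * g (v x, v y) \<partial>M) \<in> borel_measurable M"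
proof -
  have [measurable]: "v \<in> borel_measurable M" using vi by auto
  have [measurable]: "(\<lambda>(x, y). W x y * g (v x, v y)) \<in> borel_measurable (M \<Otimes>\<^sub>M M)"
  proof -
    have "(\<lambda>p. (\<lambda>(x, y). W x y) p * g (v (fst p), v (snd p))) \<in> borel_measurable (M \<Otimes>\<^sub>M M)"
      by measurable
    then show ?thesis by (simp add: case_prod_beta')
  qed
  show ?thesis by measurable
qed

lemma Fg_meas:
  assumes vi: "integrable M v"
  shows "graphon_rhs M W f g v \<in> borel_measurable M"
proof -
  have [measurable]: "v \<in> borel_measurable M" using vi by auto
  have [measurable]: "(\<lambda>x. \<integral>y. W x y * g (v x, v y) \<partial>M) \<in> borel_measurable M" by (rule I_meas[OF vi])
  show ?thesis unfolding graphon_rhs_def[abs_def] by measurable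
qed

lemma I_bound:
  assumes vi: "integrable M v" and x: "x \<in> space M"
  shows "\<bar>\<integral>y. W x y * g (v x, v y) \<partial>M\<bar> \<le> \<bar>g (0, 0)\<bar> + Lg * (\<bar>v x\<bar> + nrm M v)"
proof -
  have "\<bar>\<integral>y. W x y * g (v x, v y) \<partial>M\<bar> \<le> nrm M (\<lambda>y. W x y * g (v x, v y))"
    unfolding nrm_def by (rule integral_abs_bound)
  also have "\<dots> \<le> (\<integral>y. \<bar>g (0, 0)\<bar> + Lg * \<bar>v x\<bar> + Lg * \<bar>v y\<bar> \<partial>M)"
  proof (rule nrm_mono)
    show "integrable M (\<lambda>y. \<bar>g (0, 0)\<bar> + Lg * \<bar>v x\<bar> + Lg * \<bar>v y\<bar>)" using vi by auto
    fix y
    have "\<bar>W x y * g (v x, v y)\<bar> \<le> \<bar>g (v x, v y)\<bar>"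
      using W01[of x y] by (simp add: abs_mult mult_left_le_one_le)
    also have "\<dots> \<le> \<bar>g (0, 0)\<bar> + Lg * (\<bar>v x\<bar> + \<bar>v y\<bar>)" by (rule lip2_0[OF lg])
    finally show "\<bar>W x y * g (v x, v y)\<bar> \<le> \<bar>g (0, 0)\<bar> + Lg * \<bar>v x\<bar> + Lg * \<bar>v y\<bar>"
      by (simp add: algebra_simps)
  qed
  also have "\<dots> = \<bar>g (0, 0)\<bar> + Lg * \<bar>v x\<bar> + Lg * nrm M v"
    using vi by (simp add: nrm_def prob_space)
  finally show ?thesis by (simp add: algebra_simps)
qed

lemma Fg_int:
  assumes vi: "integrable M v"
  shows "integrable M (graphon_rhs M W f g v)"
proof (rule Bochner_Integration.integrable_bound)
  let ?c1 = "\<bar>f (0, 0)\<bar> + Lf * (\<bar>g (0, 0)\<bar> + Lg * nrm M v)"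
  let ?c2 = "Lf * (1 + Lg)"
  show "integrable M (\<lambda>x. ?c1 + ?c2 * \<bar>v x\<bar>)" using vi by auto
  show "graphon_rhs M W f g v \<in> borel_measurable M" by (rule Fg_meas[OF vi])
  show "AE x in M. norm (graphon_rhs M W f g v x) \<le> norm (?c1 + ?c2 * \<bar>v x\<bar>)"
  proof (rule AE_I2)
    fix x assume x: "x \<in> space M"
    let ?I = "\<integral>y. W x y * g (v x, v y) \<partial>M"
    have "\<bar>graphon_rhs M W f g v x\<bar> \<le> \<bar>f (0, 0)\<bar> + Lf * (\<bar>v x\<bar> + \<bar>?I\<bar>)"
      unfolding graphon_rhs_def by (rule lip2_0[OF lf])
    also have "\<dots> \<le> \<bar>f (0, 0)\<bar> + Lf * (\<bar>v x\<bar> + (\<bar>g (0, 0)\<bar> + Lg * (\<bar>v x\<bar> + nrm M v)))"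
      using I_bound[OF vi x] Lf0 by (intro add_left_mono mult_left_mono) auto
    also have "\<dots> = ?c1 + ?c2 * \<bar>v x\<bar>" by (simp add: algebra_simps)
    finally show "norm (graphon_rhs M W f g v x) \<le> norm (?c1 + ?c2 * \<bar>v x\<bar>)"
      using Lf0 Lg0 nrm_nonneg[of M v] by simp
  qed
qed

lemma Fg_lip:
  assumes vi: "integrable M v" and wi: "integrable M w"
  shows "nrm M (\<lambda>x. graphon_rhs M W f g v x - graphon_rhs M W f g w x)
     \<le> (Lf * (1 + 2 * Lg) + 1) * nrm M (\<lambda>x. v x - w x)"
proof -
  let ?n = "nrm M (\<lambda>x. v x - w x)"
  have vwi: "integrable M (\<lambda>x. v x - w x)" using vi wi by auto
  have "nrm M (\<lambda>x. graphon_rhs M W f g v x - graphon_rhs M W f g w x)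
      \<le> (\<integral>x. Lf * (1 + Lg) * \<bar>v x - w x\<bar> + Lf * Lg * ?n \<partial>M)"
  proof (rule nrm_mono)
    show "integrable M (\<lambda>x. Lf * (1 + Lg) * \<bar>v x - w x\<bar> + Lf * Lg * ?n)" using vwi by auto
    fix x assume x: "x \<in> space M"
    let ?Iv = "\<integral>y. W x y * g (v x, v y) \<partial>M"
    let ?Iw = "\<integral>y. W x y * g (w x, w y) \<partial>M"
    have "\<bar>?Iv - ?Iw\<bar> = \<bar>\<integral>y. W x y * g (v x, v y) - W x y * g (w x, w y) \<partial>M\<bar>"
      using inner_int[OF vi x] inner_int[OF wi x] by simp
    also have "\<dots> \<le> nrm M (\<lambda>y. W x y * g (v x, v y) - W x y * g (w x, w y))"
      unfolding nrm_def by (rule integral_abs_bound)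
    also have "\<dots> \<le> (\<integral>y. Lg * \<bar>v x - w x\<bar> + Lg * \<bar>v y - w y\<bar> \<partial>M)"
    proof (rule nrm_mono)
      show "integrable M (\<lambda>y. Lg * \<bar>v x - w x\<bar> + Lg * \<bar>v y - w y\<bar>)" using vwi by auto
      fix y
      have "\<bar>W x y * g (v x, v y) - W x y * g (w x, w y)\<bar> = \<bar>W x y\<bar> * \<bar>g (v x, v y) - g (w x, w y)\<bar>"
        by (simp add: abs_mult[symmetric] algebra_simps)
      also have "\<dots> \<le> \<bar>g (v x, v y) - g (w x, w y)\<bar>"
        using W01[of x y] by (simp add: mult_left_le_one_le)
      also have "\<dots> \<le> Lg * (\<bar>v x - w x\<bar> + \<bar>v y - w y\<bar>)" by (rule lip2[OF lg])
      finally show "\<bar>W x y * g (v x, v y) - W x y * g (w x, w y)\<bar> \<le> Lg * \<bar>v x - w x\<bar> + Lg * \<bar>v y - w y\<bar>"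
        by (simp add: algebra_simps)
    qed
    also have "\<dots> = Lg * \<bar>v x - w x\<bar> + Lg * ?n"
      using vwi by (simp add: nrm_def prob_space)
    finally have I: "\<bar>?Iv - ?Iw\<bar> \<le> Lg * \<bar>v x - w x\<bar> + Lg * ?n" .
    have "\<bar>graphon_rhs M W f g v x - graphon_rhs M W f g w x\<bar> \<le> Lf * (\<bar>v x - w x\<bar> + \<bar>?Iv - ?Iw\<bar>)"
      unfolding graphon_rhs_def by (rule lip2[OF lf])
    also have "\<dots> \<le> Lf * (\<bar>v x - w x\<bar> + (Lg * \<bar>v x - w x\<bar> + Lg * ?n))"
      using I Lf0 by (intro mult_left_mono) auto
    also have "\<dots> = Lf * (1 + Lg) * \<bar>v x - w x\<bar> + Lf * Lg * ?n" by (simp add: algebra_simps)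
    finally show "\<bar>graphon_rhs M W f g v x - graphon_rhs M W f g w x\<bar> \<le> Lf * (1 + Lg) * \<bar>v x - w x\<bar> + Lf * Lg * ?n" .
  qed
  also have "\<dots> = Lf * (1 + Lg) * ?n + Lf * Lg * ?n"
    using vwi by (simp add: nrm_def prob_space)
  also have "\<dots> \<le> (Lf * (1 + 2 * Lg) + 1) * ?n"
    using nrm_nonneg[of M "\<lambda>x. v x - w x"] by (simp add: algebra_simps)
  finally show ?thesis .
qed

end



lemma deriv_from_Q:
  assumes ui: "\<And>s. integrable M (u s)" and wi: "integrable M w" and d: "0 < \<delta>"
    and Q: "\<And>h. h \<noteq> 0 \<Longrightarrow> \<bar>h\<bar> < \<delta> \<Longrightarrow> nrm M (\<lambda>x. u (t+h) x - u t x - h * w x) \<le> C * h^2"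
  shows "L1_has_deriv_at M u w t"
  unfolding L1_has_deriv_at_def
proof (rule tendsto_sandwich[of "\<lambda>_. 0" _ _ "\<lambda>h. ennreal (C * \<bar>h\<bar>)"])
  show "\<forall>\<^sub>F h in at 0. 0 \<le> (\<integral>\<^sup>+ x. ennreal \<bar>(u (t + h) x - u t x) / h - w x\<bar> \<partial>M)" by simp
  show "\<forall>\<^sub>F h in at 0. (\<integral>\<^sup>+ x. ennreal \<bar>(u (t + h) x - u t x) / h - w x\<bar> \<partial>M) \<le> ennreal (C * \<bar>h\<bar>)"
    unfolding eventually_at
  proof (intro exI[of _ \<delta>] conjI d ballI impI)
    fix h :: real assume h: "h \<in> UNIV" "h \<noteq> 0 \<and> dist h 0 < \<delta>"
    then have h0: "h \<noteq> 0" and hd: "\<bar>h\<bar> < \<delta>" by (auto simp: dist_real_def)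
    have int: "integrable M (\<lambda>x. (u (t + h) x - u t x) / h - w x)" using ui wi by auto
    have "nrm M (\<lambda>x. (u (t + h) x - u t x) / h - w x) = nrm M (\<lambda>x. (1/h) * (u (t+h) x - u t x - h * w x))"
      using h0 by (intro nrm_cong) (simp add: field_simps)
    also have "\<dots> = \<bar>1/h\<bar> * nrm M (\<lambda>x. u (t+h) x - u t x - h * w x)" by (rule nrm_scale)
    also have "\<dots> \<le> \<bar>1/h\<bar> * (C * h^2)" using Q[OF h0 hd] by (intro mult_left_mono) auto
    also have "\<dots> = C * \<bar>h\<bar>" using h0 by (simp add: power2_eq_square abs_mult field_simps)
    finally show "(\<integral>\<^sup>+ x. ennreal \<bar>(u (t + h) x - u t x) / h - w x\<bar> \<partial>M) \<le> ennreal (C * \<bar>h\<bar>)"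
      using int by (simp add: nrm_ennreal ennreal_leI)
  qed
  have "((\<lambda>h. C * \<bar>h\<bar>) \<longlongrightarrow> C * \<bar>0\<bar>) (at (0::real))" by (intro tendsto_intros)
  then have "((\<lambda>h. ennreal (C * \<bar>h\<bar>)) \<longlongrightarrow> ennreal (C * \<bar>0\<bar>)) (at (0::real))" by (rule tendsto_ennrealI)
  then show "((\<lambda>h. ennreal (C * \<bar>h\<bar>)) \<longlongrightarrow> 0) (at (0::real))" by simp
qed simp

lemma deriv_real:
  assumes D: "L1_has_deriv_at M u w t" and ui: "\<And>s. integrable M (u s)" and wi: "integrable M w"
    and e: "0 < e"
  shows "\<exists>\<delta>>0. \<forall>h. h \<noteq> 0 \<and> \<bar>h\<bar> < \<delta> \<longrightarrow> nrm M (\<lambda>x. u (t+h) x - u t x - h * w x) \<le> e * \<bar>h\<bar>"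
proof -
  let ?q = "\<lambda>h. nrm M (\<lambda>x. (u (t + h) x - u t x) / h - w x)"
  have int: "integrable M (\<lambda>x. (u (t + h) x - u t x) / h - w x)" for h using ui wi by auto
  have "((\<lambda>h. ennreal (?q h)) \<longlongrightarrow> 0) (at 0)"
    using D unfolding L1_has_deriv_at_def by (simp add: nrm_ennreal[OF int])
  then have "((\<lambda>h. ennreal (?q h)) \<longlongrightarrow> ennreal 0) (at 0)" by simp
  then have "(?q \<longlongrightarrow> 0) (at 0)" by (subst (asm) tendsto_ennreal_iff) (auto simp: nrm_nonneg)
  then have "\<forall>\<^sub>F h in at 0. dist (?q h) 0 < e" using e by (rule tendstoD)
  then obtain \<delta> where d: "\<delta> > 0" "\<forall>h\<in>UNIV. h \<noteq> 0 \<and> dist h 0 < \<delta> \<longrightarrow> dist (?q h) 0 < e"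
    unfolding eventually_at by blast
  show ?thesis
  proof (intro exI[of _ \<delta>] conjI d allI impI)
    fix h :: real assume h: "h \<noteq> 0 \<and> \<bar>h\<bar> < \<delta>"
    then have q: "?q h < e" using d by (auto simp: dist_real_def nrm_nonneg)
    have "nrm M (\<lambda>x. u (t+h) x - u t x - h * w x) = nrm M (\<lambda>x. h * ((u (t + h) x - u t x) / h - w x))"
      using h by (intro nrm_cong) (simp add: field_simps)
    also have "\<dots> = \<bar>h\<bar> * ?q h" by (rule nrm_scale)
    also have "\<dots> \<le> \<bar>h\<bar> * e" using q by (intro mult_left_mono) auto
    also have "\<dots> = e * \<bar>h\<bar>" by (rule mult.commute)
    finally show "nrm M (\<lambda>x. u (t+h) x - u t x - h * w x) \<le> e * \<bar>h\<bar>" .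
  qed
qed



theorem lemma3p7:
  fixes M :: "'a measure" and W :: "'a \<Rightarrow> 'a \<Rightarrow> real"
    and f g :: "real \<times> real \<Rightarrow> real" and u0 :: "'a \<Rightarrow> real"
  assumes "prob_space M"
    and "(\<lambda>(x, y). W x y) \<in> borel_measurable (M \<Otimes>\<^sub>M M)"
    and "\<And>x y. 0 \<le> W x y \<and> W x y \<le> 1"
    and "\<And>x y. W x y = W y x"
    and "\<exists>C. C-lipschitz_on UNIV f"
    and "\<exists>C. C-lipschitz_on UNIV g"
    and "integrable M u0"
  shows "\<exists>u. graphon_L1_solution M W f g u \<and> (AE x in M. u 0 x = u0 x) \<and>
           (\<forall>v. graphon_L1_solution M W f g v \<and> (AE x in M. v 0 x = u0 x)
                \<longrightarrow> (\<forall>t. AE x in M. v t x = u t x))"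
proof -
  obtain Lf where lf: "Lf-lipschitz_on UNIV f" using assms(5) by blast
  obtain Lg where lg: "Lg-lipschitz_on UNIV g" using assms(6) by blast
  have "graphon M W f g Lf Lg"
    unfolding graphon_def graphon_axioms_def using assms(1-3) lf lg by auto
  then interpret G: graphon M W f g Lf Lg .
  have u0i: "integrable M u0" by (rule assms(7))
  define Fg where "Fg = graphon_rhs M W f g"
  define Lc where "Lc = Lf * (1 + 2*Lg) + 1"
  have Lc: "0 < Lc" unfolding Lc_def using G.Lf0 G.Lg0 mult_nonneg_nonneg[of Lf "1 + 2*Lg"] by linarith
  have lipP: "lipF M Fg Lc"
    unfolding lipF_def Fg_def using G.Fg_int G.Fg_lip Lc unfolding Lc_def by auto
  have lipN: "lipF M (\<lambda>v x. - Fg v x) Lc"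
    unfolding lipF_def
  proof (intro conjI allI impI Lc)
    fix v :: "'a \<Rightarrow> real" assume "integrable M v"
    then show "integrable M (\<lambda>x. - Fg v x)" using lipP unfolding lipF_def by auto
  next
    fix v w :: "'a \<Rightarrow> real" assume vw: "integrable M v" "integrable M w"
    have "nrm M (\<lambda>x. - Fg v x - - Fg w x) = nrm M (\<lambda>x. Fg w x - Fg v x)" by (intro nrm_cong) simp
    also have "\<dots> \<le> Lc * nrm M (\<lambda>x. w x - v x)" using lipP vw unfolding lipF_def by auto
    also have "\<dots> = Lc * nrm M (\<lambda>x. v x - w x)" using nrm_swap[of M w v] by simp
    finally show "nrm M (\<lambda>x. - Fg v x - - Fg w x) \<le> Lc * nrm M (\<lambda>x. v x - w x)" .
  qed
  interpret P: lipF M Fg Lc by (rule lipP)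
  interpret N: lipF M "\<lambda>v x. - Fg v x" Lc by (rule lipN)
  define u where "u t = (if 0 \<le> t then P.flow u0 t else N.flow u0 (-t))" for t
  have ui: "integrable M (u t)" for t
    unfolding u_def using P.flow_int[OF u0i] N.flow_int[OF u0i] by auto
  have u_0: "u 0 = u0" unfolding u_def using P.flow_0[OF u0i] by simp
  have Q: "\<exists>C \<delta>. 0 < \<delta> \<and> (\<forall>h. h \<noteq> 0 \<and> \<bar>h\<bar> < \<delta> \<longrightarrow>
      nrm M (\<lambda>x. u (t+h) x - u t x - h * Fg (u t) x) \<le> C * h^2)" for t
  proof -
    consider "0 < t" | "t < 0" | "t = 0" by linarith
    then show ?thesis
    proof cases
      case 1
      have "\<forall>h. h \<noteq> 0 \<and> \<bar>h\<bar> < t \<longrightarrow> nrm M (\<lambda>x. u (t+h) x - u t x - h * Fg (u t) x) \<le> 2 * Lc * P.B u0 (2*t) * h^2"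
      proof (intro allI impI)
        fix h :: real assume h: "h \<noteq> 0 \<and> \<bar>h\<bar> < t"
        have "nrm M (\<lambda>x. P.flow u0 (t+h) x - P.flow u0 t x - ((t+h) - t) * Fg (P.flow u0 t) x)
            \<le> 2 * Lc * P.B u0 (2*t) * ((t+h) - t)^2"
          using 1 h by (intro P.flow_Q[OF u0i]) auto
        moreover have th: "0 \<le> t + h" using h by linarith
        moreover have "u (t+h) = P.flow u0 (t+h)" "u t = P.flow u0 t"
          using 1 th unfolding u_def by auto
        ultimately show "nrm M (\<lambda>x. u (t+h) x - u t x - h * Fg (u t) x) \<le> 2 * Lc * P.B u0 (2*t) * h^2"
          by simp
      qed
      then show ?thesis using 1 by blast
    next
      case 2
      have "\<forall>h. h \<noteq> 0 \<and> \<bar>h\<bar> < -t \<longrightarrow> nrm M (\<lambda>x. u (t+h) x - u t x - h * Fg (u t) x) \<le> 2 * Lc * N.B u0 (-2*t) * h^2"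
      proof (intro allI impI)
        fix h :: real assume h: "h \<noteq> 0 \<and> \<bar>h\<bar> < -t"
        have "nrm M (\<lambda>x. N.flow u0 (-(t+h)) x - N.flow u0 (-t) x - ((-(t+h)) - (-t)) * (- Fg (N.flow u0 (-t)) x))
            \<le> 2 * Lc * N.B u0 (-2*t) * ((-(t+h)) - (-t))^2"
          using 2 h by (intro N.flow_Q[OF u0i]) auto
        moreover have "u (t+h) = N.flow u0 (-(t+h))" "u t = N.flow u0 (-t)"
          using 2 h unfolding u_def by auto
        ultimately show "nrm M (\<lambda>x. u (t+h) x - u t x - h * Fg (u t) x) \<le> 2 * Lc * N.B u0 (-2*t) * h^2"
          by (simp add: power2_eq_square)
      qed
      then show ?thesis using 2 by (intro exI[of _ "2 * Lc * N.B u0 (-2*t)"] exI[of _ "-t"]) auto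
    next
      case 3
      define C where "C = 2 * Lc * P.B u0 1 + 2 * Lc * N.B u0 1"
      have PB: "0 \<le> P.B u0 1" and NB: "0 \<le> N.B u0 1"
        using P.B_nonneg[OF u0i] N.B_nonneg[OF u0i] by auto
      have "\<forall>h. h \<noteq> 0 \<and> \<bar>h\<bar> < 1 \<longrightarrow> nrm M (\<lambda>x. u (t+h) x - u t x - h * Fg (u t) x) \<le> C * h^2"
      proof (intro allI impI)
        fix h :: real assume h: "h \<noteq> 0 \<and> \<bar>h\<bar> < 1"
        show "nrm M (\<lambda>x. u (t+h) x - u t x - h * Fg (u t) x) \<le> C * h^2"
        proof (cases "0 < h")
          case True
          have A: "nrm M (\<lambda>x. P.flow u0 h x - P.flow u0 0 x - h * Fg (P.flow u0 0) x)
              \<le> 2 * Lc * P.B u0 1 * h^2"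
            using P.flow_Q[OF u0i, of 0 1 h] True h by simp
          have Bf: "2 * Lc * P.B u0 1 * h^2 \<le> C * h^2"
            unfolding C_def using Lc NB by (intro mult_right_mono) auto
          have "u (t+h) = P.flow u0 h" "u t = P.flow u0 0"
            using 3 True unfolding u_def by auto
          then show ?thesis using order_trans[OF A Bf] by simp
        next
          case False
          then have hn: "h < 0" using h by simp
          have A: "nrm M (\<lambda>x. N.flow u0 (-h) x - N.flow u0 0 x - h * Fg (N.flow u0 0) x)
              \<le> 2 * Lc * N.B u0 1 * h^2"
            using N.flow_Q[OF u0i, of 0 1 "-h"] hn h by simp
          have Bf: "2 * Lc * N.B u0 1 * h^2 \<le> C * h^2"
            unfolding C_def using Lc PB by (intro mult_right_mono) auto
          have "u (t+h) = N.flow u0 (-h)" "u t = N.flow u0 0"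
            using 3 hn N.flow_0[OF u0i] u_0 unfolding u_def by auto
          then show ?thesis using order_trans[OF A Bf] by simp
        qed
      qed
      then show ?thesis by (intro exI[of _ C] exI[of _ 1]) auto
    qed
  qed
  have sol: "graphon_L1_solution M W f g u"
    unfolding graphon_L1_solution_def
  proof (intro conjI allI)
    fix t
    show "integrable M (u t)" by (rule ui)
    obtain C \<delta> where Cd: "0 < \<delta>" "\<forall>h. h \<noteq> 0 \<and> \<bar>h\<bar> < \<delta> \<longrightarrow>
      nrm M (\<lambda>x. u (t+h) x - u t x - h * Fg (u t) x) \<le> C * h^2" using Q[of t] by blast
    show "L1_has_deriv_at M u (graphon_rhs M W f g (u t)) t"
      unfolding Fg_def[symmetric] using Cd by (intro deriv_from_Q[OF ui P.F_int[OF ui]]) auto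
  qed
  have uniq: "\<forall>t. AE x in M. v t x = u t x"
    if vs: "graphon_L1_solution M W f g v" and v0: "AE x in M. v 0 x = u0 x" for v
  proof -
    have vi: "\<And>t. integrable M (v t)" and vd: "\<And>t. L1_has_deriv_at M v (Fg (v t)) t"
      using vs unfolding graphon_L1_solution_def Fg_def by auto
    have ud: "\<And>t. L1_has_deriv_at M u (Fg (u t)) t"
      using sol unfolding graphon_L1_solution_def Fg_def by auto
    define w where "w t = nrm M (\<lambda>x. u t x - v t x)" for t
    have Fl: "nrm M (\<lambda>x. Fg (u t) x - Fg (v t) x) \<le> Lc * w t" for t
      unfolding w_def by (intro P.F_lip ui vi)
    have est: "\<exists>\<delta>>0. \<forall>h. h \<noteq> 0 \<and> \<bar>h\<bar> < \<delta> \<longrightarrow>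
        nrm M (\<lambda>x. (u (t+h) x - v (t+h) x) - (u t x - v t x) - h * (Fg (u t) x - Fg (v t) x)) \<le> e * \<bar>h\<bar>"
      if e: "0 < e" for t e
    proof -
      obtain d1 where d1: "d1 > 0" "\<forall>h. h \<noteq> 0 \<and> \<bar>h\<bar> < d1 \<longrightarrow>
          nrm M (\<lambda>x. u (t+h) x - u t x - h * Fg (u t) x) \<le> (e/2) * \<bar>h\<bar>"
        using deriv_real[OF ud ui P.F_int[OF ui], of "e/2"] e by auto
      obtain d2 where d2: "d2 > 0" "\<forall>h. h \<noteq> 0 \<and> \<bar>h\<bar> < d2 \<longrightarrow>
          nrm M (\<lambda>x. v (t+h) x - v t x - h * Fg (v t) x) \<le> (e/2) * \<bar>h\<bar>"
        using deriv_real[OF vd vi P.F_int[OF vi], of "e/2"] e by auto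
      show ?thesis
      proof (intro exI[of _ "min d1 d2"] conjI allI impI)
        show "0 < min d1 d2" using d1 d2 by simp
        fix h :: real assume h: "h \<noteq> 0 \<and> \<bar>h\<bar> < min d1 d2"
        have "nrm M (\<lambda>x. (u (t+h) x - v (t+h) x) - (u t x - v t x) - h * (Fg (u t) x - Fg (v t) x))
            \<le> nrm M (\<lambda>x. u (t+h) x - u t x - h * Fg (u t) x)
              + nrm M (\<lambda>x. - (v (t+h) x - v t x - h * Fg (v t) x))"
          using ui vi P.F_int[OF ui] P.F_int[OF vi] by (intro nrm_add) (auto simp: algebra_simps)
        also have "nrm M (\<lambda>x. - (v (t+h) x - v t x - h * Fg (v t) x))
            = nrm M (\<lambda>x. v (t+h) x - v t x - h * Fg (v t) x)"
          using nrm_scale[of M "-1" "\<lambda>x. v (t+h) x - v t x - h * Fg (v t) x"] by simp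
        finally have this_fact: "nrm M (\<lambda>x. (u (t+h) x - v (t+h) x) - (u t x - v t x) - h * (Fg (u t) x - Fg (v t) x))
            \<le> nrm M (\<lambda>x. u (t+h) x - u t x - h * Fg (u t) x) + nrm M (\<lambda>x. v (t+h) x - v t x - h * Fg (v t) x)" .
        show "nrm M (\<lambda>x. (u (t+h) x - v (t+h) x) - (u t x - v t x) - h * (Fg (u t) x - Fg (v t) x))
            \<le> e * \<bar>h\<bar>"
        proof -
          have a1: "nrm M (\<lambda>x. u (t+h) x - u t x - h * Fg (u t) x) \<le> (e/2) * \<bar>h\<bar>"
            by (rule d1(2)[rule_format]) (use h in simp)
          have a2: "nrm M (\<lambda>x. v (t+h) x - v t x - h * Fg (v t) x) \<le> (e/2) * \<bar>h\<bar>"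
            by (rule d2(2)[rule_format]) (use h in simp)
          have a3: "(e/2) * \<bar>h\<bar> + (e/2) * \<bar>h\<bar> = e * \<bar>h\<bar>" by simp
          from this_fact a1 a2 a3 show ?thesis by linarith
        qed
      qed
    qed
    have incr: "nrm M (\<lambda>x. (u (t+h) x - v (t+h) x) - (u t x - v t x)) \<le> \<bar>h\<bar> * Lc * w t +
        nrm M (\<lambda>x. (u (t+h) x - v (t+h) x) - (u t x - v t x) - h * (Fg (u t) x - Fg (v t) x))" for t h
    proof -
      have "nrm M (\<lambda>x. (u (t+h) x - v (t+h) x) - (u t x - v t x)) \<le>
          nrm M (\<lambda>x. h * (Fg (u t) x - Fg (v t) x)) +
          nrm M (\<lambda>x. (u (t+h) x - v (t+h) x) - (u t x - v t x) - h * (Fg (u t) x - Fg (v t) x))"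
        using ui vi P.F_int[OF ui] P.F_int[OF vi] by (intro nrm_add) (auto simp: algebra_simps)
      moreover have "nrm M (\<lambda>x. h * (Fg (u t) x - Fg (v t) x)) \<le> \<bar>h\<bar> * Lc * w t"
        using Fl[of t] by (simp add: nrm_scale mult.assoc mult_left_mono)
      ultimately show ?thesis by linarith
    qed
    have tri: "w (t+h) \<le> w t + nrm M (\<lambda>x. (u (t+h) x - v (t+h) x) - (u t x - v t x))"
      "w t \<le> w (t+h) + nrm M (\<lambda>x. (u (t+h) x - v (t+h) x) - (u t x - v t x))" for t h
    proof -
      show "w (t+h) \<le> w t + nrm M (\<lambda>x. (u (t+h) x - v (t+h) x) - (u t x - v t x))"
        unfolding w_def using ui vi by (intro nrm_add) auto
      have "w t \<le> w (t+h) + nrm M (\<lambda>x. (u t x - v t x) - (u (t+h) x - v (t+h) x))"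
        unfolding w_def using ui vi by (intro nrm_add) auto
      then show "w t \<le> w (t+h) + nrm M (\<lambda>x. (u (t+h) x - v (t+h) x) - (u t x - v t x))"
        by (simp add: nrm_swap)
    qed
    have step: "\<exists>\<delta>>0. \<forall>h. h \<noteq> 0 \<and> \<bar>h\<bar> < \<delta> \<longrightarrow> w (t+h) \<le> w t * (1 + \<bar>h\<bar> * Lc) + \<bar>h\<bar> * e"
      if e: "0 < e" for t e
    proof -
      obtain \<delta> where d: "\<delta> > 0" "\<forall>h. h \<noteq> 0 \<and> \<bar>h\<bar> < \<delta> \<longrightarrow>
        nrm M (\<lambda>x. (u (t+h) x - v (t+h) x) - (u t x - v t x) - h * (Fg (u t) x - Fg (v t) x)) \<le> e * \<bar>h\<bar>"
        using est[OF e, of t] by blast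
      show ?thesis
      proof (intro exI[of _ \<delta>] conjI allI impI d(1))
        fix h :: real assume h: "h \<noteq> 0 \<and> \<bar>h\<bar> < \<delta>"
        show "w (t+h) \<le> w t * (1 + \<bar>h\<bar> * Lc) + \<bar>h\<bar> * e"
        proof -
          have r: "nrm M (\<lambda>x. (u (t+h) x - v (t+h) x) - (u t x - v t x) - h * (Fg (u t) x - Fg (v t) x)) \<le> e * \<bar>h\<bar>"
            by (rule d(2)[rule_format]) (use h in simp)
          from tri(1)[of t h] incr[of t h] r have "w (t+h) \<le> w t + \<bar>h\<bar> * Lc * w t + e * \<bar>h\<bar>" by linarith
          then show ?thesis by (simp add: algebra_simps)
        qed
      qed
    qed
    have isc: "isCont w t" for t
      unfolding continuous_at_eps_delta
    proof (intro allI impI)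
      fix e :: real assume e: "0 < e"
      obtain \<delta> where d: "\<delta> > 0" "\<forall>h. h \<noteq> 0 \<and> \<bar>h\<bar> < \<delta> \<longrightarrow>
        nrm M (\<lambda>x. (u (t+h) x - v (t+h) x) - (u t x - v t x) - h * (Fg (u t) x - Fg (v t) x)) \<le> 1 * \<bar>h\<bar>"
        using est[of 1 t] by auto
      define K where "K = Lc * w t"
      have K: "0 \<le> K" unfolding K_def w_def using Lc nrm_nonneg[of M] by simp
      show "\<exists>d>0. \<forall>x'. dist x' t < d \<longrightarrow> dist (w x') (w t) < e"
      proof (intro exI[of _ "min \<delta> (e / (K + 2))"] conjI allI impI)
        show "0 < min \<delta> (e / (K + 2))" using d e K by simp
        fix x' assume x': "dist x' t < min \<delta> (e / (K + 2))"
        define h where "h = x' - t"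
        have hx: "x' = t + h" unfolding h_def by simp
        have hd: "\<bar>h\<bar> < \<delta>" "\<bar>h\<bar> < e / (K + 2)" using x' unfolding h_def dist_real_def by auto
        show "dist (w x') (w t) < e"
        proof (cases "h = 0")
          case True then show ?thesis using e hx by simp
        next
          case False
          have n: "nrm M (\<lambda>x. (u (t+h) x - v (t+h) x) - (u t x - v t x)) \<le> \<bar>h\<bar> * (K + 1)"
          proof -
            have r: "nrm M (\<lambda>x. (u (t+h) x - v (t+h) x) - (u t x - v t x) - h * (Fg (u t) x - Fg (v t) x)) \<le> 1 * \<bar>h\<bar>"
              by (rule d(2)[rule_format]) (use False hd in simp)
            from incr[of t h] r have "nrm M (\<lambda>x. (u (t+h) x - v (t+h) x) - (u t x - v t x)) \<le> \<bar>h\<bar> * Lc * w t + 1 * \<bar>h\<bar>" by linarith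
            then show ?thesis unfolding K_def by (simp add: algebra_simps)
          qed
          have "\<bar>h\<bar> * (K + 1) < e"
          proof -
            have "\<bar>h\<bar> * (K + 1) \<le> \<bar>h\<bar> * (K + 2)" by (simp add: mult_left_mono)
            also have "\<dots> < e / (K + 2) * (K + 2)" using hd K by (intro mult_strict_right_mono) auto
            also have "\<dots> = e" using K by simp
            finally show ?thesis .
          qed
          then show ?thesis using tri[of t h] n hx by (simp add: dist_real_def abs_le_iff)
        qed
      qed
    qed
    have cw: "continuous_on UNIV w" using isc by (intro continuous_at_imp_continuous_on) auto
    have w0: "w 0 = 0"
    proof -
      have "w 0 = (\<integral>x. \<bar>u0 x - v 0 x\<bar> \<partial>M)" unfolding w_def nrm_def u_0 ..
      also have "\<dots> = (\<integral>x. 0 \<partial>M)"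
        using v0 u0i vi[of 0] by (intro integral_cong_AE) auto
      finally show ?thesis by simp
    qed
    have wle: "w t \<le> 0" for t
    proof (cases "0 \<le> t")
      case True
      show ?thesis
      proof (rule gronwall_dini[of Lc w t])
        show "continuous_on {0..} w" using cw by (rule continuous_on_subset) auto
        fix s e :: real assume s: "0 \<le> s" and e: "0 < e"
        obtain \<delta> where d: "\<delta> > 0" "\<forall>h. h \<noteq> 0 \<and> \<bar>h\<bar> < \<delta> \<longrightarrow> w (s+h) \<le> w s * (1 + \<bar>h\<bar> * Lc) + \<bar>h\<bar> * e"
          using step[OF e, of s] by blast
        show "\<exists>d>0. \<forall>h. 0 < h \<and> h < d \<longrightarrow> w (s + h) \<le> w s * (1 + h * Lc) + h * e"
        proof (intro exI[of _ \<delta>] conjI allI impI d(1))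
          fix h :: real assume h: "0 < h \<and> h < \<delta>"
          have "w (s+h) \<le> w s * (1 + \<bar>h\<bar> * Lc) + \<bar>h\<bar> * e"
            by (rule d(2)[rule_format]) (use h in simp)
          then show "w (s + h) \<le> w s * (1 + h * Lc) + h * e" using h by simp
        qed
      qed (use Lc w0 True in auto)
    next
      case False
      have "(\<lambda>s. w (- s)) (-t) \<le> 0"
      proof (rule gronwall_dini[of Lc "\<lambda>s. w (- s)" "-t"])
        show "continuous_on {0..} (\<lambda>s. w (- s))"
          by (rule continuous_on_compose2[OF cw]) (auto intro: continuous_intros)
        fix s e :: real assume s: "0 \<le> s" and e: "0 < e"
        obtain \<delta> where d: "\<delta> > 0" "\<forall>h. h \<noteq> 0 \<and> \<bar>h\<bar> < \<delta> \<longrightarrow> w (-s+h) \<le> w (-s) * (1 + \<bar>h\<bar> * Lc) + \<bar>h\<bar> * e"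
          using step[OF e, of "-s"] by blast
        show "\<exists>d>0. \<forall>h. 0 < h \<and> h < d \<longrightarrow> w (- (s + h)) \<le> w (- s) * (1 + h * Lc) + h * e"
        proof (intro exI[of _ \<delta>] conjI allI impI d(1))
          fix h :: real assume h: "0 < h \<and> h < \<delta>"
          then have "w (-s + -h) \<le> w (-s) * (1 + \<bar>-h\<bar> * Lc) + \<bar>-h\<bar> * e" using d(2)[rule_format, of "-h"] by auto
          then show "w (- (s + h)) \<le> w (- s) * (1 + h * Lc) + h * e" using h by simp
        qed
      qed (use Lc w0 False in auto)
      then show ?thesis by simp
    qed
    show ?thesis
    proof
      fix t
      have "w t = 0" using wle[of t] nrm_nonneg[of M] unfolding w_def by (metis order_antisym)
      then have "AE x in M. u t x - v t x = 0" unfolding w_def using ui vi by (intro nrm_zero_AE) auto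
      then show "AE x in M. v t x = u t x" by auto
    qed
  qed
  show ?thesis using sol u_0 uniq by (intro exI[of _ u]) auto
qed


end
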